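(* Let $(G_n)_{n\in\mathbb N}$ be a sequence of finite graphs that converges elementarily to some ultra-homogeneous graph $\hat G$. Then the following are equivalent: (i) $(G_n)$ is $\mathrm{FO}$-convergent; (ii) $(G_n)$ is $\mathrm{QF}$-convergent; (iii) $(G_n)$ is L-convergent.
   Context: For a first-order graph formula $\phi$ with free variables among $x_1,\dots,x_p$ and a finite graph $G$, $\langle\phi,G\rangle=|\{(v_1,\dots,v_p)\in V(G)^p:G\models\phi(v_1,\dots,v_p)\}|/|G|^p$. $(G_n)$ is $X$-convergent (for a set $X$ of formulas) if $\langle\phi,G_n\rangle$ converges for all $\phi\in X$; FO is the set of all first-order formulas and QF the set of quantifier-free formulas (using adjacency and equality). $(G_n)$ is L-convergent if $\hom(F,G_n)/|G_n|^{|F|}$ converges for every finite graph $F$. $(G_n)$ converges elementarily to a (finite or countable) graph $\hat G$ if for every first-order sentence $\theta$, $\hat G\models\theta$ iff $G_n\models\theta$ for all sufficiently large $n$. A graph is ultra-homogeneous if every isomorphism between finite induced subgraphs extends to an automorphism of the graph. *)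

theory Defs
  imports "HOL-Library.FuncSet" Complex_Main
begin

record 'a graph =
  verts :: "'a set"
  adj :: "'a \<Rightarrow> 'a \<Rightarrow> bool"

definition is_graph :: "'a graph \<Rightarrow> bool" where
  "is_graph G \<longleftrightarrow> verts G \<noteq> {} \<and>
     (\<forall>u v. adj G u v \<longrightarrow> u \<in> verts G \<and> v \<in> verts G) \<and>
     (\<forall>u v. adj G u v \<longrightarrow> adj G v u) \<and>
     (\<forall>u. \<not> adj G u u)"

definition finite_graph :: "'a graph \<Rightarrow> bool" where
  "finite_graph G \<longleftrightarrow> is_graph G \<and> finite (verts G)"

datatype fo =
    Adj nat nat
  | Eq nat nat
  | Neg fo
  | Conj fo fo
  | Ex nat fo

fun fv :: "fo \<Rightarrow> nat set" where
  "fv (Adj i j) = {i, j}"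
| "fv (Eq i j) = {i, j}"
| "fv (Neg \<phi>) = fv \<phi>"
| "fv (Conj \<phi> \<psi>) = fv \<phi> \<union> fv \<psi>"
| "fv (Ex i \<phi>) = fv \<phi> - {i}"

fun qfree :: "fo \<Rightarrow> bool" where
  "qfree (Adj i j) = True"
| "qfree (Eq i j) = True"
| "qfree (Neg \<phi>) = qfree \<phi>"
| "qfree (Conj \<phi> \<psi>) = (qfree \<phi> \<and> qfree \<psi>)"
| "qfree (Ex i \<phi>) = False"

fun sat :: "'a graph \<Rightarrow> fo \<Rightarrow> (nat \<Rightarrow> 'a) \<Rightarrow> bool" where
  "sat G (Adj i j) s = adj G (s i) (s j)"
| "sat G (Eq i j) s = (s i = s j)"
| "sat G (Neg \<phi>) s = (\<not> sat G \<phi> s)"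
| "sat G (Conj \<phi> \<psi>) s = (sat G \<phi> s \<and> sat G \<psi> s)"
| "sat G (Ex i \<phi>) s = (\<exists>v\<in>verts G. sat G \<phi> (s(i := v)))"

definition sentence :: "fo \<Rightarrow> bool" where
  "sentence \<theta> \<longleftrightarrow> fv \<theta> = {}"

definition models :: "'a graph \<Rightarrow> fo \<Rightarrow> bool" where
  "models G \<theta> \<longleftrightarrow> (\<forall>s. sat G \<theta> s)"

definition nvars :: "fo \<Rightarrow> nat" where
  "nvars \<phi> = (if fv \<phi> = {} then 0 else Suc (Max (fv \<phi>)))"

definition stone :: "fo \<Rightarrow> 'a graph \<Rightarrow> real" where
  "stone \<phi> G =
     real (card {t \<in> {0..<nvars \<phi>} \<rightarrow>\<^sub>E verts G. sat G \<phi> t})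
     / real (card (verts G)) ^ nvars \<phi>"

definition FO_convergent :: "(nat \<Rightarrow> 'a graph) \<Rightarrow> bool" where
  "FO_convergent Gs \<longleftrightarrow> (\<forall>\<phi>. convergent (\<lambda>n. stone \<phi> (Gs n)))"

definition QF_convergent :: "(nat \<Rightarrow> 'a graph) \<Rightarrow> bool" where
  "QF_convergent Gs \<longleftrightarrow> (\<forall>\<phi>. qfree \<phi> \<longrightarrow> convergent (\<lambda>n. stone \<phi> (Gs n)))"

definition hom_count :: "'b graph \<Rightarrow> 'a graph \<Rightarrow> nat" where
  "hom_count F G = card {f \<in> verts F \<rightarrow>\<^sub>E verts G.
      \<forall>u v. adj F u v \<longrightarrow> adj G (f u) (f v)}"

definition hom_density :: "'b graph \<Rightarrow> 'a graph \<Rightarrow> real" where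
  "hom_density F G = real (hom_count F G) / real (card (verts G)) ^ card (verts F)"

text \<open>L-convergence: hom densities converge for every finite graph F
  (every finite graph is isomorphic to one on natural-number vertices).\<close>
definition L_convergent :: "(nat \<Rightarrow> 'a graph) \<Rightarrow> bool" where
  "L_convergent Gs \<longleftrightarrow>
     (\<forall>F :: nat graph. finite_graph F \<longrightarrow> convergent (\<lambda>n. hom_density F (Gs n)))"

definition elem_converges_to :: "(nat \<Rightarrow> 'a graph) \<Rightarrow> 'b graph \<Rightarrow> bool" where
  "elem_converges_to Gs H \<longleftrightarrow>
     (\<forall>\<theta>. sentence \<theta> \<longrightarrow>
        (models H \<theta> \<longleftrightarrow> (\<forall>\<^sub>F n in sequentially. models (Gs n) \<theta>)))"

definition ultra_homogeneous :: "'a graph \<Rightarrow> bool" where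
  "ultra_homogeneous G \<longleftrightarrow>
     (\<forall>A B f. A \<subseteq> verts G \<and> B \<subseteq> verts G \<and> finite A \<and> bij_betw f A B \<and>
        (\<forall>x\<in>A. \<forall>y\<in>A. adj G x y \<longleftrightarrow> adj G (f x) (f y)) \<longrightarrow>
        (\<exists>g. bij_betw g (verts G) (verts G) \<and>
             (\<forall>x\<in>verts G. \<forall>y\<in>verts G. adj G x y \<longleftrightarrow> adj G (g x) (g y)) \<and>
             (\<forall>x\<in>A. g x = f x)))"

end

theory Submission
  imports Defs
begin


lemma finite_fv: "finite (fv \<phi>)"
  by (induction \<phi>) auto

lemma fv_nvars: "fv \<phi> \<subseteq> {0..<nvars \<phi>}"
proof
  fix x assume "x \<in> fv \<phi>"
  then have "x \<le> Max (fv \<phi>)" using finite_fv by auto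
  then show "x \<in> {0..<nvars \<phi>}" using \<open>x \<in> fv \<phi>\<close> by (auto simp: nvars_def)
qed

lemma nvars_eq: "fv \<phi> = {0..<k} \<Longrightarrow> nvars \<phi> = k"
proof (cases k)
  case (Suc m)
  assume "fv \<phi> = {0..<k}"
  moreover have "Max {0..<Suc m} = m"
    by (rule Max_eqI) auto
  ultimately show ?thesis using Suc by (simp add: nvars_def)
qed (simp add: nvars_def)

lemma sat_cong: "(\<And>i. i \<in> fv \<phi> \<Longrightarrow> s i = s' i) \<Longrightarrow> sat G \<phi> s = sat G \<phi> s'"
proof (induction \<phi> arbitrary: s s')
  case (Adj i j)
  then show ?case by simp
next
  case (Eq i j)
  then show ?case by simp
next
  case (Neg \<phi>)
  then show ?case by (metis fv.simps(3) sat.simps(3))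
next
  case (Conj \<phi>1 \<phi>2)
  have "sat G \<phi>1 s = sat G \<phi>1 s'" by (rule Conj.IH(1)) (simp add: Conj.prems)
  moreover have "sat G \<phi>2 s = sat G \<phi>2 s'" by (rule Conj.IH(2)) (simp add: Conj.prems)
  ultimately show ?case by simp
next
  case (Ex i \<phi>)
  have "\<And>v. sat G \<phi> (s(i:=v)) = sat G \<phi> (s'(i:=v))"
  proof -
    fix v show "sat G \<phi> (s(i:=v)) = sat G \<phi> (s'(i:=v))"
    proof (rule Ex.IH)
      fix x assume "x \<in> fv \<phi>" then show "(s(i:=v)) x = (s'(i:=v)) x"
        using Ex.prems[of x] by (cases "x = i") auto
    qed
  qed
  then show ?case by simp
qed

lemma sat_foldr_Conj: "sat G (foldr Conj xs b) s \<longleftrightarrow> (\<forall>x\<in>set xs. sat G x s) \<and> sat G b s"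
  by (induction xs) auto

lemma fv_foldr_Conj: "fv (foldr Conj xs b) = \<Union>(fv ` set xs) \<union> fv b"
  by (induction xs) auto

lemma qfree_foldr_Conj: "qfree (foldr Conj xs b) \<longleftrightarrow> (\<forall>x\<in>set xs. qfree x) \<and> qfree b"
  by (induction xs) auto

definition allL :: "nat list \<Rightarrow> fo \<Rightarrow> fo" where
  "allL xs \<theta> = foldr (\<lambda>i acc. Neg (Ex i (Neg acc))) xs \<theta>"

lemma fv_allL: "fv (allL xs \<theta>) = fv \<theta> - set xs"
  by (induction xs) (auto simp: allL_def)

lemma sat_allL: "sat G (allL xs \<theta>) s \<longleftrightarrow>
   (\<forall>s'. (\<forall>i\<in>set xs. s' i \<in> verts G) \<longrightarrow> (\<forall>i. i \<notin> set xs \<longrightarrow> s' i = s i) \<longrightarrow> sat G \<theta> s')"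
proof (induction xs arbitrary: s)
  case Nil
  show ?case unfolding allL_def
  proof (intro iffI allI impI)
    fix s' assume "sat G (foldr (\<lambda>i acc. Neg (fo.Ex i (Neg acc))) [] \<theta>) s"
      "\<forall>i\<in>set []. s' i \<in> verts G" "\<forall>i. i \<notin> set [] \<longrightarrow> s' i = s i"
    then have "s' = s" "sat G \<theta> s" by (auto simp: fun_eq_iff)
    then show "sat G \<theta> s'" by simp
  next
    assume "\<forall>s'. (\<forall>i\<in>set []. s' i \<in> verts G) \<longrightarrow> (\<forall>i. i \<notin> set [] \<longrightarrow> s' i = s i) \<longrightarrow> sat G \<theta> s'"
    then show "sat G (foldr (\<lambda>i acc. Neg (fo.Ex i (Neg acc))) [] \<theta>) s" by simp
  qed
next
  case (Cons x xs)
  have "sat G (allL (x#xs) \<theta>) s \<longleftrightarrow> (\<forall>v\<in>verts G. sat G (allL xs \<theta>) (s(x:=v)))"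
    by (simp add: allL_def)
  also have "\<dots> \<longleftrightarrow> (\<forall>s'. (\<forall>i\<in>set (x#xs). s' i \<in> verts G) \<longrightarrow> (\<forall>i. i \<notin> set (x#xs) \<longrightarrow> s' i = s i) \<longrightarrow> sat G \<theta> s')"
  proof (intro iffI allI impI ballI)
    fix s' assume A: "\<forall>v\<in>verts G. sat G (allL xs \<theta>) (s(x := v))"
      and B: "\<forall>i\<in>set (x # xs). s' i \<in> verts G" and C: "\<forall>i. i \<notin> set (x # xs) \<longrightarrow> s' i = s i"
    have "s' x \<in> verts G" using B by simp
    then have "sat G (allL xs \<theta>) (s(x := s' x))" using A by blast
    then have D: "\<forall>s''. (\<forall>i\<in>set xs. s'' i \<in> verts G) \<longrightarrow> (\<forall>i. i \<notin> set xs \<longrightarrow> s'' i = (s(x := s' x)) i) \<longrightarrow> sat G \<theta> s''"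
      using Cons.IH[of "s(x := s' x)"] by simp
    have "\<forall>i. i \<notin> set xs \<longrightarrow> s' i = (s(x := s' x)) i"
    proof (intro allI impI)
      fix i assume "i \<notin> set xs" then show "s' i = (s(x := s' x)) i" using C by (cases "i = x") auto
    qed
    moreover have "\<forall>i\<in>set xs. s' i \<in> verts G" using B by simp
    ultimately show "sat G \<theta> s'" using D by blast
  next
    fix v assume A: "\<forall>s'. (\<forall>i\<in>set (x # xs). s' i \<in> verts G) \<longrightarrow> (\<forall>i. i \<notin> set (x # xs) \<longrightarrow> s' i = s i) \<longrightarrow> sat G \<theta> s'"
      and v: "v \<in> verts G"
    show "sat G (allL xs \<theta>) (s(x := v))" unfolding Cons.IH
    proof (intro allI impI)
      fix s' assume B: "\<forall>i\<in>set xs. s' i \<in> verts G" and C: "\<forall>i. i \<notin> set xs \<longrightarrow> s' i = (s(x := v)) i"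
      have "\<forall>i\<in>set (x # xs). s' i \<in> verts G"
      proof
        fix i assume "i \<in> set (x # xs)"
        then show "s' i \<in> verts G" using B C v by (cases "i \<in> set xs") auto
      qed
      moreover have "\<forall>i. i \<notin> set (x # xs) \<longrightarrow> s' i = s i" using C by auto
      ultimately show "sat G \<theta> s'" using A by blast
    qed
  qed
  finally show ?case .
qed

lemma sentence_sat: "sentence \<theta> \<Longrightarrow> sat G \<theta> s' = sat G \<theta> s"
  by (rule sat_cong) (simp add: sentence_def)

lemma sentence_models_iff: "sentence \<theta> \<Longrightarrow> models G \<theta> \<longleftrightarrow> sat G \<theta> s"
  unfolding models_def using sentence_sat by blast

lemma not_models_Neg: "sentence \<theta> \<Longrightarrow> \<not> models G \<theta> \<Longrightarrow> models G (Neg \<theta>)"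
  using sentence_sat[of \<theta> G] unfolding models_def by (metis sat.simps(3))

lemma sentence_Neg: "sentence (Neg \<theta>) = sentence \<theta>" by (simp add: sentence_def)

lemma models_Neg_not: "models G (Neg \<theta>) \<Longrightarrow> \<not> models G \<theta>"
  by (auto simp: models_def)

lemma elem_false:
  assumes "elem_converges_to Gs H" "sentence \<theta>" "\<not> models H \<theta>"
  shows "\<forall>\<^sub>F n in sequentially. \<not> models (Gs n) \<theta>"
proof -
  have "models H (Neg \<theta>)" using not_models_Neg assms by blast
  then have "\<forall>\<^sub>F n in sequentially. models (Gs n) (Neg \<theta>)"
    using assms(1,2) unfolding elem_converges_to_def by (simp add: sentence_Neg)
  then show ?thesis by eventually_elim (rule models_Neg_not)
qed

lemma elem_true:
  assumes "elem_converges_to Gs H" "sentence \<theta>" "models H \<theta>"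
  shows "\<forall>\<^sub>F n in sequentially. models (Gs n) \<theta>"
  using assms unfolding elem_converges_to_def by blast



definition tp :: "'a graph \<Rightarrow> nat \<Rightarrow> (nat \<Rightarrow> 'a) \<Rightarrow> nat \<times> nat \<Rightarrow> bool \<times> bool" where
  "tp G k s = (\<lambda>(i,j). if i < k \<and> j < k then (adj G (s i) (s j), s i = s j) else (False, False))"

definition lit :: "(nat \<times> nat \<Rightarrow> bool \<times> bool) \<Rightarrow> nat \<times> nat \<Rightarrow> fo" where
  "lit D p = (case p of (i,j) \<Rightarrow> Conj (if fst (D (i,j)) then Adj i j else Neg (Adj i j))
                                       (if snd (D (i,j)) then Eq i j else Neg (Eq i j)))"

definition diag :: "nat \<Rightarrow> (nat \<times> nat \<Rightarrow> bool \<times> bool) \<Rightarrow> fo" where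
  "diag k D = foldr Conj (map (lit D) (List.product [0..<k] [0..<k])) (Eq 0 0)"

lemma sat_lit: "sat G (lit D (i,j)) s \<longleftrightarrow> D (i,j) = (adj G (s i) (s j), s i = s j)"
  by (cases "D (i,j)") (auto simp: lit_def)

lemma sat_diag: "sat G (diag k D) s \<longleftrightarrow> (\<forall>i<k. \<forall>j<k. D (i,j) = (adj G (s i) (s j), s i = s j))"
  unfolding diag_def sat_foldr_Conj by (auto simp: sat_lit)

lemma fv_lit: "fv (lit D (i,j)) = {i,j}"
  by (auto simp: lit_def)

lemma fv_diag: "0 < k \<Longrightarrow> fv (diag k D) \<subseteq> {0..<k}"
  unfolding diag_def fv_foldr_Conj by (auto simp: fv_lit)

lemma qfree_diag: "qfree (diag k D)"
  unfolding diag_def qfree_foldr_Conj by (auto simp: lit_def)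

lemma tp_eq_iff: "tp G k s = tp G k s' \<longleftrightarrow>
   (\<forall>i<k. \<forall>j<k. adj G (s i) (s j) = adj G (s' i) (s' j) \<and> (s i = s j) = (s' i = s' j))"
proof
  assume "tp G k s = tp G k s'"
  then have E: "\<And>i j. tp G k s (i,j) = tp G k s' (i,j)" by simp
  show "\<forall>i<k. \<forall>j<k. adj G (s i) (s j) = adj G (s' i) (s' j) \<and> (s i = s j) = (s' i = s' j)"
  proof (intro allI impI)
    fix i j assume "i < k" "j < k"
    then have "(adj G (s i) (s j), s i = s j) = (adj G (s' i) (s' j), s' i = s' j)"
      using E[of i j] by (simp add: tp_def)
    then show "adj G (s i) (s j) = adj G (s' i) (s' j) \<and> (s i = s j) = (s' i = s' j)" by simp
  qed
next
  assume "\<forall>i<k. \<forall>j<k. adj G (s i) (s j) = adj G (s' i) (s' j) \<and> (s i = s j) = (s' i = s' j)"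
  then show "tp G k s = tp G k s'" by (auto simp: tp_def fun_eq_iff)
qed

lemma sat_diag_tp: "sat G (diag k (tp G k s0)) s \<longleftrightarrow> tp G k s = tp G k s0"
  unfolding sat_diag tp_eq_iff by (auto simp: tp_def)

definition disjL :: "fo list \<Rightarrow> fo" where
  "disjL xs = foldr (\<lambda>a acc. Neg (Conj (Neg a) (Neg acc))) xs (Neg (Eq 0 0))"

lemma sat_disjL: "sat G (disjL xs) s \<longleftrightarrow> (\<exists>x\<in>set xs. sat G x s)"
  by (induction xs) (auto simp: disjL_def)

lemma fv_disjL: "fv (disjL xs) = \<Union>(fv ` set xs) \<union> {0}"
  by (induction xs) (auto simp: disjL_def)

lemma qfree_disjL: "qfree (disjL xs) \<longleftrightarrow> (\<forall>x\<in>set xs. qfree x)"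
  by (induction xs) (auto simp: disjL_def)

definition Tk :: "nat \<Rightarrow> fo" where
  "Tk k = foldr Conj (map (\<lambda>i. Eq i i) [0..<k]) (Eq 0 0)"

lemma sat_Tk: "sat G (Tk k) s"
  unfolding Tk_def sat_foldr_Conj by auto

lemma fv_Tk: "0 < k \<Longrightarrow> fv (Tk k) = {0..<k}"
  unfolding Tk_def fv_foldr_Conj by auto

lemma qfree_Tk: "qfree (Tk k)"
  unfolding Tk_def qfree_foldr_Conj by auto

lemma aut_sat:
  assumes g: "bij_betw g (verts H) (verts H)"
    and ga: "\<forall>x\<in>verts H. \<forall>y\<in>verts H. adj H x y \<longleftrightarrow> adj H (g x) (g y)"
    and s: "\<And>i. i \<in> fv \<phi> \<Longrightarrow> s i \<in> verts H"
  shows "sat H \<phi> (g \<circ> s) = sat H \<phi> s"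
  using s
proof (induction \<phi> arbitrary: s)
  case (Adj i j)
  then show ?case using ga by simp
next
  case (Eq i j)
  have "s i \<in> verts H" "s j \<in> verts H" using Eq by auto
  then show ?case using g by (auto simp: bij_betw_def inj_on_def)
next
  case (Neg \<phi>)
  then show ?case by simp
next
  case (Conj \<phi>1 \<phi>2)
  have "sat H \<phi>1 (g \<circ> s) = sat H \<phi>1 s" by (rule Conj.IH(1)) (simp add: Conj.prems)
  moreover have "sat H \<phi>2 (g \<circ> s) = sat H \<phi>2 s" by (rule Conj.IH(2)) (simp add: Conj.prems)
  ultimately show ?case by (simp only: sat.simps(4))
next
  case (Ex i \<phi>)
  have IH: "sat H \<phi> (g \<circ> (s(i:=w))) = sat H \<phi> (s(i:=w))" if w: "w \<in> verts H" for w
  proof (rule Ex.IH)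
    fix x assume "x \<in> fv \<phi>" then show "(s(i:=w)) x \<in> verts H"
      using Ex.prems[of x] w by (cases "x = i") auto
  qed
  have eq: "(g \<circ> s)(i := g w) = g \<circ> (s(i:=w))" for w by (auto simp: fun_eq_iff)
  have "sat H (Ex i \<phi>) (g \<circ> s) \<longleftrightarrow> (\<exists>v\<in>verts H. sat H \<phi> ((g \<circ> s)(i:=v)))" by simp
  also have "\<dots> \<longleftrightarrow> (\<exists>w\<in>verts H. sat H \<phi> ((g \<circ> s)(i:=g w)))"
  proof
    assume "\<exists>v\<in>verts H. sat H \<phi> ((g \<circ> s)(i:=v))"
    then obtain v where v: "v \<in> verts H" "sat H \<phi> ((g \<circ> s)(i:=v))" by blast
    then have "v \<in> g ` verts H" using g by (simp add: bij_betw_def)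
    then obtain w where "w \<in> verts H" "v = g w" by blast
    then show "\<exists>w\<in>verts H. sat H \<phi> ((g \<circ> s)(i:=g w))" using v by blast
  next
    assume "\<exists>w\<in>verts H. sat H \<phi> ((g \<circ> s)(i:=g w))"
    then obtain w where w: "w \<in> verts H" "sat H \<phi> ((g \<circ> s)(i:=g w))" by blast
    then have "g w \<in> verts H" using g by (simp add: bij_betw_apply)
    then show "\<exists>v\<in>verts H. sat H \<phi> ((g \<circ> s)(i:=v))" using w by blast
  qed
  also have "\<dots> \<longleftrightarrow> (\<exists>w\<in>verts H. sat H \<phi> (s(i:=w)))"
    using IH eq by simp
  finally show ?case by (simp only: sat.simps(5))
qed

lemma homog:
  assumes uh: "ultra_homogeneous H"
    and s: "\<forall>i<k. s i \<in> verts H" and s': "\<forall>i<k. s' i \<in> verts H"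
    and t: "tp H k s = tp H k s'" and fv: "fv \<phi> \<subseteq> {0..<k}"
  shows "sat H \<phi> s = sat H \<phi> s'"
proof -
  have T: "\<forall>i<k. \<forall>j<k. adj H (s i) (s j) = adj H (s' i) (s' j) \<and> (s i = s j) = (s' i = s' j)"
    using t tp_eq_iff by blast
  define A where "A = s ` {0..<k}"
  define B where "B = s' ` {0..<k}"
  define f where "f v = s' (SOME i. i < k \<and> s i = v)" for v
  have fs: "f (s i) = s' i" if "i < k" for i
  proof -
    have "\<exists>j. j < k \<and> s j = s i" using that by blast
    then have "(SOME j. j < k \<and> s j = s i) < k \<and> s (SOME j. j < k \<and> s j = s i) = s i"
      by (rule someI_ex)
    then have "s' (SOME j. j < k \<and> s j = s i) = s' i" using T that by metis
    then show ?thesis unfolding f_def .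
  qed
  have bij: "bij_betw f A B"
    unfolding bij_betw_def inj_on_def A_def B_def
  proof (intro conjI ballI impI)
    fix x y assume "x \<in> s ` {0..<k}" "y \<in> s ` {0..<k}" "f x = f y"
    then obtain i j where ij: "i < k" "j < k" "x = s i" "y = s j" by auto
    then have "s' i = s' j" using fs \<open>f x = f y\<close> by simp
    then show "x = y" using T ij by blast
  next
    have "f ` s ` {0..<k} = (\<lambda>i. f (s i)) ` {0..<k}" by (simp add: image_image)
    also have "\<dots> = s' ` {0..<k}" using fs by (intro image_cong) auto
    finally show "f ` s ` {0..<k} = s' ` {0..<k}" .
  qed
  have adjp: "\<forall>x\<in>A. \<forall>y\<in>A. adj H x y \<longleftrightarrow> adj H (f x) (f y)"
  proof (intro ballI)
    fix x y assume "x \<in> A" "y \<in> A"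
    then obtain i j where ij: "i < k" "j < k" "x = s i" "y = s j" by (auto simp: A_def)
    then show "adj H x y \<longleftrightarrow> adj H (f x) (f y)" using fs T by simp
  qed
  have "A \<subseteq> verts H" "B \<subseteq> verts H" "finite A"
    using s s' by (auto simp: A_def B_def)
  then have "\<exists>g. bij_betw g (verts H) (verts H) \<and>
             (\<forall>x\<in>verts H. \<forall>y\<in>verts H. adj H x y \<longleftrightarrow> adj H (g x) (g y)) \<and>
             (\<forall>x\<in>A. g x = f x)"
    using uh bij adjp unfolding ultra_homogeneous_def by presburger
  then obtain g where g: "bij_betw g (verts H) (verts H)"
    and ga: "\<forall>x\<in>verts H. \<forall>y\<in>verts H. adj H x y \<longleftrightarrow> adj H (g x) (g y)"
    and gf: "\<forall>x\<in>A. g x = f x" by blast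
  have "sat H \<phi> s' = sat H \<phi> (g \<circ> s)"
  proof (rule sat_cong)
    fix i assume "i \<in> fv \<phi>"
    then have "i < k" using fv by auto
    then have "s i \<in> A" by (simp add: A_def)
    then have "g (s i) = f (s i)" using gf by blast
    then show "s' i = (g \<circ> s) i" using fs[OF \<open>i < k\<close>] by simp
  qed
  also have "\<dots> = sat H \<phi> s"
    by (rule aut_sat[OF g ga]) (use fv s in auto)
  finally show ?thesis by simp
qed

lemma QE:
  assumes uh: "ultra_homogeneous H" and k: "0 < k" and fv: "fv \<phi> \<subseteq> {0..<k}"
  shows "\<exists>\<psi>. qfree \<psi> \<and> fv \<psi> = {0..<k} \<and>
            (\<forall>s. (\<forall>i<k. s i \<in> verts H) \<longrightarrow> sat H \<phi> s = sat H \<psi> s)"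
proof -
  define Ty where "Ty = {D :: nat \<times> nat \<Rightarrow> bool \<times> bool. \<forall>p. (p \<in> {0..<k} \<times> {0..<k} \<longrightarrow> D p \<in> UNIV)
        \<and> (p \<notin> {0..<k} \<times> {0..<k} \<longrightarrow> D p = (False, False))}"
  have fTy: "finite Ty" unfolding Ty_def by (rule finite_set_of_finite_funs) auto
  define R where "R = tp H k ` {s. (\<forall>i<k. s i \<in> verts H) \<and> sat H \<phi> s}"
  have "R \<subseteq> Ty" by (auto simp: R_def Ty_def tp_def)
  then have "finite R" using fTy finite_subset by blast
  then obtain xs where xs: "set xs = R" using finite_list by blast
  define \<psi> where "\<psi> = Conj (disjL (map (diag k) xs)) (Tk k)"
  have "qfree \<psi>" by (auto simp: \<psi>_def qfree_disjL qfree_diag qfree_Tk)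
  moreover have "fv \<psi> = {0..<k}"
    using fv_diag[OF k] fv_Tk[OF k] k by (auto simp: \<psi>_def fv_disjL)
  moreover have "sat H \<phi> s = sat H \<psi> s" if s: "\<forall>i<k. s i \<in> verts H" for s
  proof -
    have "sat H \<psi> s \<longleftrightarrow> (\<exists>D\<in>R. sat H (diag k D) s)"
      by (simp add: \<psi>_def sat_disjL sat_Tk xs)
    also have "\<dots> \<longleftrightarrow> (\<exists>s0. (\<forall>i<k. s0 i \<in> verts H) \<and> sat H \<phi> s0 \<and> tp H k s = tp H k s0)"
      by (auto simp: R_def sat_diag_tp)
    also have "\<dots> \<longleftrightarrow> sat H \<phi> s"
    proof
      assume "\<exists>s0. (\<forall>i<k. s0 i \<in> verts H) \<and> sat H \<phi> s0 \<and> tp H k s = tp H k s0"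
      then obtain s0 where "\<forall>i<k. s0 i \<in> verts H" "sat H \<phi> s0" "tp H k s = tp H k s0" by blast
      then show "sat H \<phi> s" using homog[OF uh s _ _ fv, of s0] by simp
    qed (use s in blast)
    finally show ?thesis by simp
  qed
  ultimately show ?thesis by blast
qed



definition iffF :: "fo \<Rightarrow> fo \<Rightarrow> fo" where
  "iffF a b = Conj (Neg (Conj a (Neg b))) (Neg (Conj b (Neg a)))"

lemma sat_iffF: "sat G (iffF a b) s \<longleftrightarrow> (sat G a s \<longleftrightarrow> sat G b s)"
  by (auto simp: iffF_def)

lemma fv_iffF: "fv (iffF a b) = fv a \<union> fv b"
  by (auto simp: iffF_def)

lemma stone_0:
  assumes "nvars \<phi> = 0"
  shows "stone \<phi> G = (if sat G \<phi> (\<lambda>x. undefined) then 1 else 0)"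
proof -
  have "{t \<in> {0..<nvars \<phi>} \<rightarrow>\<^sub>E verts G. sat G \<phi> t} = (if sat G \<phi> (\<lambda>x. undefined) then {\<lambda>x. undefined} else {})"
    using assms by auto
  then show ?thesis unfolding stone_def using assms by simp
qed

lemma stone_cong:
  assumes "nvars \<phi> = nvars \<psi>"
    and "\<And>t. t \<in> {0..<nvars \<phi>} \<rightarrow>\<^sub>E verts G \<Longrightarrow> sat G \<phi> t = sat G \<psi> t"
  shows "stone \<phi> G = stone \<psi> G"
proof -
  have "{t \<in> {0..<nvars \<phi>} \<rightarrow>\<^sub>E verts G. sat G \<phi> t} = {t \<in> {0..<nvars \<psi>} \<rightarrow>\<^sub>E verts G. sat G \<psi> t}"
    using assms by auto
  then show ?thesis unfolding stone_def using assms(1) by simp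
qed

lemma QF_imp_FO:
  assumes ec: "elem_converges_to Gs H" and uh: "ultra_homogeneous H"
    and qf: "QF_convergent Gs"
  shows "FO_convergent Gs"
  unfolding FO_convergent_def
proof
  fix \<phi>
  define k where "k = nvars \<phi>"
  have fvk: "fv \<phi> \<subseteq> {0..<k}" using fv_nvars k_def by simp
  show "convergent (\<lambda>n. stone \<phi> (Gs n))"
  proof (cases "k = 0")
    case True
    then have sen: "sentence \<phi>" using fvk by (simp add: sentence_def)
    have st: "stone \<phi> (Gs n) = (if models (Gs n) \<phi> then 1 else 0)" for n
    proof -
      have "stone \<phi> (Gs n) = (if sat (Gs n) \<phi> (\<lambda>x. undefined) then 1 else 0)"
        using stone_0[of \<phi> "Gs n"] True k_def by simp
      moreover have "models (Gs n) \<phi> = sat (Gs n) \<phi> (\<lambda>x. undefined)"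
        by (rule sentence_models_iff[OF sen])
      ultimately show ?thesis by simp
    qed
    show ?thesis
    proof (cases "models H \<phi>")
      case True
      then have "\<forall>\<^sub>F n in sequentially. models (Gs n) \<phi>" using elem_true[OF ec sen] by simp
      then have E: "\<forall>\<^sub>F n in sequentially. stone \<phi> (Gs n) = 1" by eventually_elim (simp add: st)
      show ?thesis using convergent_cong[OF E] convergent_const by simp
    next
      case False
      then have "\<forall>\<^sub>F n in sequentially. \<not> models (Gs n) \<phi>" using elem_false[OF ec sen] by simp
      then have E: "\<forall>\<^sub>F n in sequentially. stone \<phi> (Gs n) = 0" by eventually_elim (simp add: st)
      show ?thesis using convergent_cong[OF E] convergent_const by simp
    qed
  next
    case False
    then have k: "0 < k" by simp
    obtain \<psi> where q: "qfree \<psi>" and fvp: "fv \<psi> = {0..<k}"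
      and eq: "\<forall>s. (\<forall>i<k. s i \<in> verts H) \<longrightarrow> sat H \<phi> s = sat H \<psi> s"
      using QE[OF uh k fvk] by blast
    have nv: "nvars \<psi> = k" using nvars_eq[OF fvp] .
    define \<theta> where "\<theta> = allL [0..<k] (iffF \<phi> \<psi>)"
    have sen: "sentence \<theta>" using fvk fvp by (auto simp: sentence_def \<theta>_def fv_allL fv_iffF)
    have "models H \<theta>" unfolding models_def \<theta>_def sat_allL
      using eq by (auto simp: sat_iffF)
    then have ev: "\<forall>\<^sub>F n in sequentially. models (Gs n) \<theta>" using elem_true[OF ec sen] by simp
    have E: "\<forall>\<^sub>F n in sequentially. stone \<psi> (Gs n) = stone \<phi> (Gs n)"
      using ev
    proof eventually_elim
      case (elim n)
      show ?case
      proof (rule stone_cong)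
        show "nvars \<psi> = nvars \<phi>" using nv k_def by simp
      next
        fix t assume t: "t \<in> {0..<nvars \<psi>} \<rightarrow>\<^sub>E verts (Gs n)"
        have "sat (Gs n) \<theta> t" using elim by (simp add: models_def)
        then have "\<forall>s'. (\<forall>i\<in>set [0..<k]. s' i \<in> verts (Gs n)) \<longrightarrow> (\<forall>i. i \<notin> set [0..<k] \<longrightarrow> s' i = t i)
               \<longrightarrow> sat (Gs n) (iffF \<phi> \<psi>) s'"
          unfolding \<theta>_def sat_allL .
        moreover have "\<forall>i\<in>set [0..<k]. t i \<in> verts (Gs n)" using t nv by auto
        ultimately have "sat (Gs n) (iffF \<phi> \<psi>) t" by blast
        then show "sat (Gs n) \<psi> t = sat (Gs n) \<phi> t" by (simp add: sat_iffF)
      qed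
    qed
    have "convergent (\<lambda>n. stone \<psi> (Gs n))" using qf q by (simp add: QF_convergent_def)
    then show ?thesis using convergent_cong[OF E] by simp
  qed
qed



definition distF :: "nat \<Rightarrow> fo" where
  "distF m = foldr Conj (map (\<lambda>(i,j). Neg (Eq i j)) (filter (\<lambda>(i,j). i \<noteq> j) (List.product [0..<m] [0..<m]))) (Eq 0 0)"

lemma sat_distF: "sat G (distF m) s \<longleftrightarrow> (\<forall>i<m. \<forall>j<m. i \<noteq> j \<longrightarrow> s i \<noteq> s j)"
  unfolding distF_def sat_foldr_Conj by auto

lemma fv_distF: "0 < m \<Longrightarrow> fv (distF m) \<subseteq> {0..<m}"
  unfolding distF_def fv_foldr_Conj by auto

definition atleast :: "nat \<Rightarrow> fo" where
  "atleast m = Neg (allL [0..<m] (Neg (distF m)))"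

lemma sentence_atleast: "0 < m \<Longrightarrow> sentence (atleast m)"
  using fv_distF[of m] by (auto simp: sentence_def atleast_def fv_allL)

lemma sat_atleast: "sat G (atleast m) s \<longleftrightarrow>
   (\<exists>s'. (\<forall>i<m. s' i \<in> verts G) \<and> (\<forall>i. \<not> i < m \<longrightarrow> s' i = s i) \<and> inj_on s' {0..<m})"
proof -
  have a: "\<And>s'. inj_on s' {0..<m} \<longleftrightarrow> (\<forall>i<m. \<forall>j<m. i \<noteq> j \<longrightarrow> s' i \<noteq> s' j)"
    unfolding inj_on_def by auto metis
  have c: "\<And>i. i \<notin> {0..<m} \<longleftrightarrow> \<not> i < m" by auto
  have b: "\<And>s'. (\<forall>i\<in>{0..<m}. s' i \<in> verts G) \<longleftrightarrow> (\<forall>i<m. s' i \<in> verts G)" by auto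
  have "sat G (atleast m) s \<longleftrightarrow> \<not> (\<forall>s'. (\<forall>i\<in>set [0..<m]. s' i \<in> verts G) \<longrightarrow> (\<forall>i. i \<notin> set [0..<m] \<longrightarrow> s' i = s i) \<longrightarrow> \<not> inj_on s' {0..<m})"
    unfolding atleast_def sat.simps(3) sat_allL sat_distF a ..
  also have "\<dots> \<longleftrightarrow> (\<exists>s'. (\<forall>i\<in>set [0..<m]. s' i \<in> verts G) \<and> (\<forall>i. i \<notin> set [0..<m] \<longrightarrow> s' i = s i) \<and> inj_on s' {0..<m})"
    by blast
  also have "\<dots> \<longleftrightarrow> (\<exists>s'. (\<forall>i<m. s' i \<in> verts G) \<and> (\<forall>i. \<not> i < m \<longrightarrow> s' i = s i) \<and> inj_on s' {0..<m})"
    by (simp only: set_upt b c)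
  finally show ?thesis .
qed

lemma atleast_models:
  assumes "0 < m"
  shows "models G (atleast m) \<longleftrightarrow> (infinite (verts G) \<or> m \<le> card (verts G))"
proof -
  have "models G (atleast m) \<longleftrightarrow> sat G (atleast m) (\<lambda>x. undefined)"
    by (rule sentence_models_iff[OF sentence_atleast[OF assms]])
  also have "\<dots> \<longleftrightarrow> (infinite (verts G) \<or> m \<le> card (verts G))"
  proof
    assume "sat G (atleast m) (\<lambda>x. undefined)"
    then obtain s' where s': "\<forall>i<m. s' i \<in> verts G" "inj_on s' {0..<m}"
      unfolding sat_atleast by blast
    show "infinite (verts G) \<or> m \<le> card (verts G)"
    proof (cases "finite (verts G)")
      case True
      have "s' ` {0..<m} \<subseteq> verts G" using s' by auto
      then have "card (s' ` {0..<m}) \<le> card (verts G)" using True card_mono by blast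
      then show ?thesis using s' card_image by fastforce
    qed simp
  next
    assume A: "infinite (verts G) \<or> m \<le> card (verts G)"
    obtain B where B: "finite B" "B \<subseteq> verts G" "m \<le> card B"
    proof (cases "finite (verts G)")
      case True
      then show ?thesis using that A by blast
    next
      case False
      then obtain B where "finite B" "card B = m" "B \<subseteq> verts G"
        using infinite_arbitrarily_large by blast
      then show ?thesis using that by simp
    qed
    then obtain f where f: "f ` {0..<m} \<subseteq> B" "inj_on f {0..<m}"
      using card_le_inj[of "{0..<m}" B] by auto
    define s' where "s' i = (if i < m then f i else undefined)" for i
    have "\<forall>i<m. s' i \<in> verts G"
    proof (intro allI impI)
      fix i assume "i < m" then have "f i \<in> B" using f(1) by auto
      then show "s' i \<in> verts G" using B(2) \<open>i < m\<close> by (auto simp: s'_def)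
    qed
    moreover have "\<forall>i. \<not> i < m \<longrightarrow> s' i = (\<lambda>x. undefined) i" by (simp add: s'_def)
    moreover have "inj_on s' {0..<m}" using f(2) by (auto simp: s'_def inj_on_def)
    ultimately show "sat G (atleast m) (\<lambda>x. undefined)" unfolding sat_atleast by blast
  qed
  finally show ?thesis .
qed

lemma invsize:
  assumes fin: "\<And>n. finite_graph (Gs n)" and H: "is_graph H" and ec: "elem_converges_to Gs H"
  shows "convergent (\<lambda>n. 1 / real (card (verts (Gs n))))"
proof (cases "finite (verts H)")
  case True
  define c where "c = card (verts H)"
  have c: "0 < c" using H True by (auto simp: c_def is_graph_def card_gt_0_iff)
  have "models H (atleast c)" using atleast_models[OF c, of H] True by (simp add: c_def)
  then have e1: "\<forall>\<^sub>F n in sequentially. models (Gs n) (atleast c)"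
    using elem_true[OF ec sentence_atleast[OF c]] by simp
  have "\<not> models H (atleast (Suc c))" using atleast_models[of "Suc c" H] True by (simp add: c_def)
  then have e2: "\<forall>\<^sub>F n in sequentially. \<not> models (Gs n) (atleast (Suc c))"
    using elem_false[OF ec sentence_atleast] by simp
  have E: "\<forall>\<^sub>F n in sequentially. 1 / real (card (verts (Gs n))) = 1 / real c"
    using e1 e2
  proof eventually_elim
    case (elim n)
    have "finite (verts (Gs n))" using fin by (simp add: finite_graph_def)
    then have "card (verts (Gs n)) = c"
      using elim atleast_models[OF c, of "Gs n"] atleast_models[of "Suc c" "Gs n"] by simp
    then show ?case by simp
  qed
  show ?thesis using convergent_cong[OF E] convergent_const by simp
next
  case False
  have "filterlim (\<lambda>n. real (card (verts (Gs n)))) at_top sequentially"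
    unfolding filterlim_at_top
  proof
    fix Z :: real
    define m where "m = Suc (nat \<lceil>Z\<rceil>)"
    have m: "0 < m" by (simp add: m_def)
    have "models H (atleast m)" using atleast_models[OF m, of H] False by simp
    then have "\<forall>\<^sub>F n in sequentially. models (Gs n) (atleast m)"
      using elem_true[OF ec sentence_atleast[OF m]] by simp
    then show "\<forall>\<^sub>F n in sequentially. Z \<le> real (card (verts (Gs n)))"
    proof eventually_elim
      case (elim n)
      have "finite (verts (Gs n))" using fin by (simp add: finite_graph_def)
      then have "m \<le> card (verts (Gs n))"
        using elim atleast_models[OF m, of "Gs n"] by simp
      moreover have "Z \<le> real m" unfolding m_def by linarith
      ultimately show ?case by linarith
    qed
  qed
  then have "(\<lambda>n. inverse (real (card (verts (Gs n))))) \<longlonglongrightarrow> 0"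
    by (rule tendsto_inverse_0_at_top)
  then show ?thesis by (auto simp: convergent_def inverse_eq_divide)
qed



lemma hom_formula:
  fixes F :: "nat graph" and G :: "'a graph"
  assumes F: "finite_graph F"
  shows "\<exists>\<chi>. qfree \<chi> \<and> nvars \<chi> = card (verts F) \<and>
     (\<forall>G::'a graph. card {t \<in> {0..<nvars \<chi>} \<rightarrow>\<^sub>E verts G. sat G \<chi> t} = hom_count F G)"
proof -
  define m where "m = card (verts F)"
  have fin: "finite (verts F)" and ne: "verts F \<noteq> {}" and Fg: "is_graph F"
    using F by (auto simp: finite_graph_def is_graph_def)
  have m: "0 < m" using fin ne by (simp add: m_def card_gt_0_iff)
  obtain e where e: "bij_betw e {0..<m} (verts F)" using ex_bij_betw_nat_finite[OF fin] m_def by blast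
  have einj: "inj_on e {0..<m}" and eim: "e ` {0..<m} = verts F" using e by (auto simp: bij_betw_def)
  define inv where "inv = inv_into {0..<m} e"
  have inv1: "inv (e i) = i" if "i < m" for i using einj that by (simp add: inv_def inv_into_f_f)
  have inv2: "e (inv x) = x" "inv x < m" if "x \<in> verts F" for x
    using that eim inv_into_into[of x e "{0..<m}"] by (auto simp: inv_def f_inv_into_f)
  define edges where "edges = filter (\<lambda>(i,j). adj F (e i) (e j)) (List.product [0..<m] [0..<m])"
  define \<chi> where "\<chi> = foldr Conj (map (\<lambda>(i,j). Adj i j) edges) (Tk m)"
  have q: "qfree \<chi>" unfolding \<chi>_def qfree_foldr_Conj using qfree_Tk by auto
  have fvc: "fv \<chi> = {0..<m}" unfolding \<chi>_def fv_foldr_Conj fv_Tk[OF m]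
    by (auto simp: edges_def)
  have nv: "nvars \<chi> = m" by (rule nvars_eq[OF fvc])
  have satc: "sat G \<chi> t \<longleftrightarrow> (\<forall>i<m. \<forall>j<m. adj F (e i) (e j) \<longrightarrow> adj G (t i) (t j))" for G :: "'a graph" and t
    unfolding \<chi>_def sat_foldr_Conj by (auto simp: edges_def sat_Tk)
  have "card {t \<in> {0..<nvars \<chi>} \<rightarrow>\<^sub>E verts G. sat G \<chi> t} = hom_count F G" for G :: "'a graph"
  proof -
    let ?A = "{f \<in> verts F \<rightarrow>\<^sub>E verts G. \<forall>u v. adj F u v \<longrightarrow> adj G (f u) (f v)}"
    let ?B = "{t \<in> {0..<m} \<rightarrow>\<^sub>E verts G. sat G \<chi> t}"
    have "bij_betw (\<lambda>f. restrict (f \<circ> e) {0..<m}) ?A ?B"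
    proof (rule bij_betw_byWitness[where f'="\<lambda>t. restrict (t \<circ> inv) (verts F)"])
      show "\<forall>f\<in>?A. restrict (restrict (f \<circ> e) {0..<m} \<circ> inv) (verts F) = f"
      proof
        fix f assume f: "f \<in> ?A"
        show "restrict (restrict (f \<circ> e) {0..<m} \<circ> inv) (verts F) = f"
        proof
          fix x show "restrict (restrict (f \<circ> e) {0..<m} \<circ> inv) (verts F) x = f x"
            using f inv2[of x] by (cases "x \<in> verts F") (auto simp: PiE_def extensional_def)
        qed
      qed
      show "\<forall>t\<in>?B. restrict (restrict (t \<circ> inv) (verts F) \<circ> e) {0..<m} = t"
      proof
        fix t assume t: "t \<in> ?B"
        show "restrict (restrict (t \<circ> inv) (verts F) \<circ> e) {0..<m} = t"
        proof
          fix i show "restrict (restrict (t \<circ> inv) (verts F) \<circ> e) {0..<m} i = t i"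
            using t inv1[of i] eim by (cases "i < m") (auto simp: PiE_def extensional_def)
        qed
      qed
      show "(\<lambda>f. restrict (f \<circ> e) {0..<m}) ` ?A \<subseteq> ?B"
      proof
        fix t assume "t \<in> (\<lambda>f. restrict (f \<circ> e) {0..<m}) ` ?A"
        then obtain f where f: "f \<in> ?A" and t: "t = restrict (f \<circ> e) {0..<m}" by blast
        have "\<forall>i<m. f (e i) \<in> verts G"
        proof (intro allI impI)
          fix i assume "i < m" then have "e i \<in> verts F" using eim by auto
          moreover have "f \<in> verts F \<rightarrow>\<^sub>E verts G" using f by blast
          ultimately show "f (e i) \<in> verts G" by (rule PiE_mem[rotated])
        qed
        then have "t \<in> {0..<m} \<rightarrow>\<^sub>E verts G" unfolding t by auto
        moreover have "sat G \<chi> t" unfolding satc t using f by auto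
        ultimately show "t \<in> ?B" by blast
      qed
      show "(\<lambda>t. restrict (t \<circ> inv) (verts F)) ` ?B \<subseteq> ?A"
      proof
        fix f assume "f \<in> (\<lambda>t. restrict (t \<circ> inv) (verts F)) ` ?B"
        then obtain t where t: "t \<in> ?B" and f: "f = restrict (t \<circ> inv) (verts F)" by blast
        have "f \<in> verts F \<rightarrow>\<^sub>E verts G" using t inv2 unfolding f by auto
        moreover have "adj G (f u) (f v)" if "adj F u v" for u v
        proof -
          have uv: "u \<in> verts F" "v \<in> verts F" using that Fg by (auto simp: is_graph_def)
          have "adj F (e (inv u)) (e (inv v))" using that inv2 uv by simp
          then have "adj G (t (inv u)) (t (inv v))" using t inv2 uv unfolding satc by blast
          then show ?thesis using uv unfolding f by simp
        qed
        ultimately show "f \<in> ?A" by blast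
      qed
    qed
    then have "card ?A = card ?B" by (rule bij_betw_same_card)
    then show ?thesis unfolding hom_count_def nv by simp
  qed
  then show ?thesis using q nv m_def by blast
qed

lemma QF_imp_L:
  fixes Gs :: "nat \<Rightarrow> 'a graph"
  assumes qf: "QF_convergent Gs"
  shows "L_convergent Gs"
  unfolding L_convergent_def
proof (intro allI impI)
  fix F :: "nat graph" assume F: "finite_graph F"
  obtain \<chi> where q: "qfree \<chi>" and nv: "nvars \<chi> = card (verts F)"
    and c: "\<forall>G::'a graph. card {t \<in> {0..<nvars \<chi>} \<rightarrow>\<^sub>E verts G. sat G \<chi> t} = hom_count F G"
    using hom_formula[OF F] by blast
  have "stone \<chi> (Gs n) = hom_density F (Gs n)" for n
  proof -
    have "card {t \<in> {0..<nvars \<chi>} \<rightarrow>\<^sub>E verts (Gs n). sat (Gs n) \<chi> t} = hom_count F (Gs n)"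
      using c by blast
    then show ?thesis unfolding stone_def hom_density_def nv by simp
  qed
  moreover have "convergent (\<lambda>n. stone \<chi> (Gs n))" using qf q by (simp add: QF_convergent_def)
  ultimately show "convergent (\<lambda>n. hom_density F (Gs n))" by simp
qed



definition cnt :: "nat set \<Rightarrow> fo list \<Rightarrow> 'a graph \<Rightarrow> nat" where
  "cnt I M G = card {t \<in> I \<rightarrow>\<^sub>E verts G. \<forall>a\<in>set M. sat G a t}"

fun isatom :: "fo \<Rightarrow> bool" where
  "isatom (Adj i j) = True"
| "isatom (Eq i j) = True"
| "isatom _ = False"

fun ren :: "(nat \<Rightarrow> nat) \<Rightarrow> fo \<Rightarrow> fo" where
  "ren r (Adj i j) = Adj (r i) (r j)"
| "ren r (Eq i j) = Eq (r i) (r j)"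
| "ren r a = a"

lemma sat_ren: "isatom a \<Longrightarrow> sat G (ren r a) s = sat G a (s \<circ> r)"
  by (cases a) auto

lemma fv_ren: "isatom a \<Longrightarrow> fv (ren r a) = r ` fv a"
  by (cases a) auto

lemma isatom_ren: "isatom a \<Longrightarrow> isatom (ren r a)"
  by (cases a) auto

lemma cnt_elim:
  assumes ij: "i \<noteq> j" "i \<in> I" "j \<in> I" and EM: "Eq i j \<in> set M"
    and at: "\<forall>a\<in>set M. isatom a"
  shows "cnt I M G = cnt (I - {j}) (map (ren (\<lambda>x. if x = j then i else x)) (removeAll (Eq i j) M)) G"
proof -
  define r where "r = (\<lambda>x. if x = j then i else x)"
  let ?M' = "map (ren r) (removeAll (Eq i j) M)"
  let ?A = "{t \<in> I \<rightarrow>\<^sub>E verts G. \<forall>a\<in>set M. sat G a t}"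
  let ?B = "{t \<in> (I - {j}) \<rightarrow>\<^sub>E verts G. \<forall>a\<in>set ?M'. sat G a t}"
  have comp1: "(t(j := undefined)) \<circ> r = t(j := t i)" for t :: "nat \<Rightarrow> 'a"
    using ij(1) by (auto simp: r_def fun_eq_iff)
  have comp2: "u \<circ> r = u(j := u i)" for u :: "nat \<Rightarrow> 'a"
    by (auto simp: r_def fun_eq_iff)
  have "bij_betw (\<lambda>t. t(j := undefined)) ?A ?B"
  proof (rule bij_betw_byWitness[where f'="\<lambda>u. u(j := u i)"])
    show "\<forall>t\<in>?A. (t(j := undefined))(j := (t(j := undefined)) i) = t"
    proof
      fix t assume t: "t \<in> ?A"
      then have "sat G (Eq i j) t" using EM by blast
      then show "(t(j := undefined))(j := (t(j := undefined)) i) = t"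
        using ij(1) by (auto simp: fun_eq_iff)
    qed
    show "\<forall>u\<in>?B. (u(j := u i))(j := undefined) = u"
    proof
      fix u assume u: "u \<in> ?B"
      then have "u j = undefined" using PiE_arb[of u "I - {j}" "\<lambda>_. verts G" j] by blast
      then show "(u(j := u i))(j := undefined) = u" by (auto simp: fun_eq_iff)
    qed
    show "(\<lambda>t. t(j := undefined)) ` ?A \<subseteq> ?B"
    proof
      fix u assume "u \<in> (\<lambda>t. t(j := undefined)) ` ?A"
      then obtain t where t: "t \<in> ?A" and u: "u = t(j := undefined)" by blast
      have "sat G (Eq i j) t" using t EM by blast
      then have tij: "t j = t i" by simp
      have "u \<in> (I - {j}) \<rightarrow>\<^sub>E verts G" using t unfolding u by (auto simp: PiE_def Pi_def extensional_def)
      moreover have "\<forall>a\<in>set ?M'. sat G a u"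
      proof
        fix a' assume "a' \<in> set ?M'"
        then obtain a where a: "a \<in> set M" "a' = ren r a" by auto
        have "isatom a" using a at by blast
        then have "sat G a' u = sat G a (u \<circ> r)" using a sat_ren[of a G r u] by simp
        also have "u \<circ> r = t" unfolding u comp1 using tij by (auto simp: fun_eq_iff)
        finally show "sat G a' u" using t a by simp
      qed
      ultimately show "u \<in> ?B" by blast
    qed
    show "(\<lambda>u. u(j := u i)) ` ?B \<subseteq> ?A"
    proof
      fix t assume "t \<in> (\<lambda>u. u(j := u i)) ` ?B"
      then obtain u where u: "u \<in> ?B" and t: "t = u(j := u i)" by blast
      have "u i \<in> verts G" using u ij by (auto simp: PiE_def Pi_def)
      then have "t \<in> I \<rightarrow>\<^sub>E verts G" using u ij unfolding t by (auto simp: PiE_def Pi_def extensional_def)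
      moreover have "\<forall>a\<in>set M. sat G a t"
      proof
        fix a assume a: "a \<in> set M"
        show "sat G a t"
        proof (cases "a = Eq i j")
          case True
          then show ?thesis unfolding t using ij by simp
        next
          case False
          then have "ren r a \<in> set ?M'" using a by auto
          then have "sat G (ren r a) u" using u by blast
          then show ?thesis using sat_ren[of a G r u] a at unfolding comp2 t by simp
        qed
      qed
      ultimately show "t \<in> ?A" by blast
    qed
  qed
  then have "card ?A = card ?B" by (rule bij_betw_same_card)
  then show ?thesis unfolding cnt_def r_def by simp
qed

lemma cnt_hom:
  assumes G: "is_graph G" and I: "finite I" "I \<noteq> {}"
    and at: "\<forall>a\<in>set M. \<exists>u v. a = Adj u v \<and> u \<noteq> v \<and> u \<in> I \<and> v \<in> I"
  defines "F \<equiv> \<lparr>verts = I, adj = (\<lambda>u v. Adj u v \<in> set M \<or> Adj v u \<in> set M)\<rparr> :: nat graph"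
  shows "finite_graph F" "cnt I M G = hom_count F G"
proof -
  have e1: "u \<in> I \<and> v \<in> I \<and> u \<noteq> v" if "Adj u v \<in> set M" for u v
  proof -
    have "\<exists>u' v'. Adj u v = Adj u' v' \<and> u' \<noteq> v' \<and> u' \<in> I \<and> v' \<in> I"
      using at that by (rule bspec)
    then show ?thesis by simp
  qed
  show "finite_graph F"
    unfolding finite_graph_def is_graph_def F_def using I e1 by auto
  have "{t \<in> I \<rightarrow>\<^sub>E verts G. \<forall>a\<in>set M. sat G a t} =
        {f \<in> verts F \<rightarrow>\<^sub>E verts G. \<forall>u v. adj F u v \<longrightarrow> adj G (f u) (f v)}"
  proof (rule Collect_cong)
    fix t
    have symG: "adj G x y \<Longrightarrow> adj G y x" for x y using G unfolding is_graph_def by blast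
    have "(\<forall>a\<in>set M. sat G a t) \<longleftrightarrow> (\<forall>u v. Adj u v \<in> set M \<longrightarrow> adj G (t u) (t v))"
    proof
      assume A: "\<forall>a\<in>set M. sat G a t" show "\<forall>u v. Adj u v \<in> set M \<longrightarrow> adj G (t u) (t v)"
      proof (intro allI impI)
        fix u v assume "Adj u v \<in> set M"
        then have "sat G (Adj u v) t" using A by blast
        then show "adj G (t u) (t v)" by simp
      qed
    next
      assume A: "\<forall>u v. Adj u v \<in> set M \<longrightarrow> adj G (t u) (t v)"
      show "\<forall>a\<in>set M. sat G a t"
      proof
        fix a assume a: "a \<in> set M"
        have "\<exists>u v. a = Adj u v \<and> u \<noteq> v \<and> u \<in> I \<and> v \<in> I" using at a by (rule bspec)
        then obtain u v where uv: "a = Adj u v" by blast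
        then have "Adj u v \<in> set M" using a by simp
        then have "adj G (t u) (t v)" using A by blast
        then show "sat G a t" using uv by simp
      qed
    qed
    also have "\<dots> \<longleftrightarrow> (\<forall>u v. adj F u v \<longrightarrow> adj G (t u) (t v))"
    proof (intro iffI allI impI)
      fix u v assume A: "\<forall>u v. Adj u v \<in> set M \<longrightarrow> adj G (t u) (t v)" and B: "adj F u v"
      have "Adj u v \<in> set M \<or> Adj v u \<in> set M" using B by (simp add: F_def)
      then show "adj G (t u) (t v)"
      proof
        assume "Adj u v \<in> set M" then show ?thesis using A by blast
      next
        assume "Adj v u \<in> set M" then have "adj G (t v) (t u)" using A by blast
        then show ?thesis by (rule symG)
      qed
    next
      fix u v assume A: "\<forall>u v. adj F u v \<longrightarrow> adj G (t u) (t v)" and C: "Adj u v \<in> set M"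
      have "adj F u v" using C by (simp add: F_def)
      then show "adj G (t u) (t v)" using A by blast
    qed
    finally have PQ: "(\<forall>a\<in>set M. sat G a t) \<longleftrightarrow> (\<forall>u v. adj F u v \<longrightarrow> adj G (t u) (t v))" .
    have VF: "verts F = I" by (simp add: F_def)
    show "(t \<in> I \<rightarrow>\<^sub>E verts G \<and> (\<forall>a\<in>set M. sat G a t)) =
         (t \<in> verts F \<rightarrow>\<^sub>E verts G \<and> (\<forall>u v. adj F u v \<longrightarrow> adj G (t u) (t v)))"
      unfolding VF PQ ..
  qed
  then show "cnt I M G = hom_count F G" unfolding cnt_def hom_count_def by simp
qed



lemma conv_pow:
  assumes "convergent (\<lambda>n. X n :: real)" shows "convergent (\<lambda>n. X n ^ e)"
proof -
  from assms obtain L where "X \<longlonglongrightarrow> L" by (auto simp: convergent_def)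
  then have "(\<lambda>n. X n ^ e) \<longlonglongrightarrow> L ^ e" by (intro tendsto_power)
  then show ?thesis by (auto simp: convergent_def)
qed

lemma div_split: "(h::real) / x ^ (c + e) = (h / x ^ c) * (1 / x) ^ e"
  by (simp add: power_add power_one_over)

lemma main_conv:
  fixes Gs :: "nat \<Rightarrow> 'a graph"
  assumes L: "L_convergent Gs" and fin: "\<And>n. finite_graph (Gs n)"
    and inv: "convergent (\<lambda>n. 1 / real (card (verts (Gs n))))"
  shows "finite I \<Longrightarrow> \<forall>a\<in>set M. isatom a \<and> fv a \<subseteq> I \<Longrightarrow>
     convergent (\<lambda>n. real (cnt I M (Gs n)) / real (card (verts (Gs n))) ^ (card I + e))"
proof (induction "length M" arbitrary: I M e rule: less_induct)
  case less
  have pw: "convergent (\<lambda>n. (1 / real (card (verts (Gs n)))) ^ e')" for e'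
    by (rule conv_pow[OF inv])
  have isg: "is_graph (Gs n)" for n using fin by (simp add: finite_graph_def)
  show ?case
  proof (cases "\<exists>i. Adj i i \<in> set M")
    case True
    then obtain i where i: "Adj i i \<in> set M" by blast
    have "cnt I M (Gs n) = 0" for n
    proof -
      have "{t \<in> I \<rightarrow>\<^sub>E verts (Gs n). \<forall>a\<in>set M. sat (Gs n) a t} = {}"
      proof (rule ccontr)
        assume "{t \<in> I \<rightarrow>\<^sub>E verts (Gs n). \<forall>a\<in>set M. sat (Gs n) a t} \<noteq> {}"
        then obtain t where "\<forall>a\<in>set M. sat (Gs n) a t" by blast
        then have "sat (Gs n) (Adj i i) t" using i by blast
        then show False using isg[of n] by (simp add: is_graph_def)
      qed
      then show ?thesis unfolding cnt_def by (metis card.empty)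
    qed
    then show ?thesis by (simp add: convergent_const)
  next
    case noloop: False
    show ?thesis
    proof (cases "\<exists>i. Eq i i \<in> set M")
      case True
      then obtain i where i: "Eq i i \<in> set M" by blast
      define M' where "M' = removeAll (Eq i i) M"
      have len: "length M' < length M" unfolding M'_def using i by (rule length_removeAll_less)
      have "cnt I M G = cnt I M' G" for G :: "'a graph"
      proof -
        have "(\<forall>a\<in>set M. sat G a t) \<longleftrightarrow> (\<forall>a\<in>set M'. sat G a t)" for t
          by (auto simp: M'_def)
        then show ?thesis unfolding cnt_def by simp
      qed
      moreover have "convergent (\<lambda>n. real (cnt I M' (Gs n)) / real (card (verts (Gs n))) ^ (card I + e))"
        by (rule less.hyps[OF len]) (use less.prems in \<open>auto simp: M'_def\<close>)
      ultimately show ?thesis by simp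
    next
      case noeqd: False
      show ?thesis
      proof (cases "\<exists>i j. Eq i j \<in> set M")
        case True
        then obtain i j where ijM: "Eq i j \<in> set M" by blast
        have ij: "i \<noteq> j" using noeqd ijM by blast
        have "fv (Eq i j) \<subseteq> I" using less.prems ijM by blast
        then have iI: "i \<in> I" "j \<in> I" by auto
        define r where "r = (\<lambda>x. if x = j then i else x)"
        define M' where "M' = map (ren r) (removeAll (Eq i j) M)"
        have len: "length M' < length M" unfolding M'_def using ijM by (simp add: length_removeAll_less)
        have at: "\<forall>a\<in>set M. isatom a" using less.prems by blast
        have ce: "cnt I M G = cnt (I - {j}) M' G" for G :: "'a graph"
          unfolding M'_def r_def by (rule cnt_elim[OF ij iI ijM at])
        have prem': "\<forall>a\<in>set M'. isatom a \<and> fv a \<subseteq> I - {j}"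
        proof
          fix a' assume "a' \<in> set M'"
          then obtain a where a: "a \<in> set M" "a' = ren r a" by (auto simp: M'_def)
          have ia: "isatom a" "fv a \<subseteq> I" using a less.prems by auto
          have "fv a' = r ` fv a" using a fv_ren[OF ia(1)] by simp
          also have "\<dots> \<subseteq> I - {j}" using ia(2) iI ij by (auto simp: r_def)
          finally show "isatom a' \<and> fv a' \<subseteq> I - {j}" using isatom_ren[OF ia(1)] a by simp
        qed
        have cI: "card I + e = card (I - {j}) + Suc e"
          using iI less.prems(1) by (simp add: card_Diff_singleton) (metis Suc_pred card_gt_0_iff empty_iff)
        have "convergent (\<lambda>n. real (cnt (I - {j}) M' (Gs n)) / real (card (verts (Gs n))) ^ (card (I - {j}) + Suc e))"
          by (rule less.hyps[OF len]) (use less.prems prem' in auto)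
        then show ?thesis unfolding ce cI .
      next
        case noeq: False
        have atA: "\<forall>a\<in>set M. \<exists>u v. a = Adj u v \<and> u \<noteq> v \<and> u \<in> I \<and> v \<in> I"
        proof
          fix a assume a: "a \<in> set M"
          then have ia: "isatom a" "fv a \<subseteq> I" using less.prems by auto
          show "\<exists>u v. a = Adj u v \<and> u \<noteq> v \<and> u \<in> I \<and> v \<in> I"
          proof (cases a)
            case (Adj u v)
            then show ?thesis using ia noloop a by auto
          next
            case (Eq u v)
            then show ?thesis using noeq a by blast
          qed (use ia in auto)
        qed
        show ?thesis
        proof (cases "I = {}")
          case True
          then have "M = []" using atA by (cases M) auto
          then have "cnt I M (Gs n) = 1" for n using True by (simp add: cnt_def)
          then show ?thesis using pw[of e] True by (simp add: power_one_over)
        next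
          case False
          define F where "F = (\<lparr>verts = I, adj = (\<lambda>u v. Adj u v \<in> set M \<or> Adj v u \<in> set M)\<rparr> :: nat graph)"
          have fg: "finite_graph F" unfolding F_def by (rule cnt_hom(1)[OF isg less.prems(1) False atA])
          have ch: "cnt I M (Gs n) = hom_count F (Gs n)" for n
            unfolding F_def by (rule cnt_hom(2)[OF isg less.prems(1) False atA])
          have cF: "card (verts F) = card I" by (simp add: F_def)
          have "convergent (\<lambda>n. hom_density F (Gs n))" using L fg by (simp add: L_convergent_def)
          then have "convergent (\<lambda>n. hom_density F (Gs n) * (1 / real (card (verts (Gs n)))) ^ e)"
            using pw by (rule convergent_mult)
          moreover have "hom_density F (Gs n) * (1 / real (card (verts (Gs n)))) ^ e =
              real (cnt I M (Gs n)) / real (card (verts (Gs n))) ^ (card I + e)" for n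
            unfolding hom_density_def ch cF div_split ..
          ultimately show ?thesis by simp
        qed
      qed
    qed
  qed
qed



definition ind :: "'a graph \<Rightarrow> fo list \<Rightarrow> (nat \<Rightarrow> 'a) \<Rightarrow> real" where
  "ind G M t = (if \<forall>a\<in>set M. sat G a t then 1 else 0)"

definition evalp :: "'a graph \<Rightarrow> (real \<times> fo list) list \<Rightarrow> (nat \<Rightarrow> 'a) \<Rightarrow> real" where
  "evalp G p t = sum_list (map (\<lambda>x. fst x * ind G (snd x) t) p)"

fun poly :: "fo \<Rightarrow> (real \<times> fo list) list" where
  "poly (Adj i j) = [(1, [Adj i j])]"
| "poly (Eq i j) = [(1, [Eq i j])]"
| "poly (Neg \<phi>) = (1, []) # map (\<lambda>x. (- fst x, snd x)) (poly \<phi>)"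
| "poly (Conj \<phi> \<psi>) = concat (map (\<lambda>x. map (\<lambda>y. (fst x * fst y, snd x @ snd y)) (poly \<psi>)) (poly \<phi>))"
| "poly (Ex i \<phi>) = []"

lemma ind_append: "ind G (M @ N) t = ind G M t * ind G N t"
  by (auto simp: ind_def)

lemma evalp_Nil: "evalp G [] t = 0" by (simp add: evalp_def)
lemma evalp_Cons: "evalp G (x # p) t = fst x * ind G (snd x) t + evalp G p t" by (simp add: evalp_def)

lemma evalp_neg: "evalp G (map (\<lambda>x. (- fst x, snd x)) p) t = - evalp G p t"
  by (induction p) (auto simp: evalp_def)

lemma evalp_mult_aux: "evalp G (map (\<lambda>y. (c * fst y, M @ snd y)) q) t = c * ind G M t * evalp G q t"
  by (induction q) (auto simp: evalp_def ind_append algebra_simps)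

lemma evalp_mult: "evalp G (concat (map (\<lambda>x. map (\<lambda>y. (fst x * fst y, snd x @ snd y)) q) p)) t
   = evalp G p t * evalp G q t"
proof (induction p)
  case Nil then show ?case by (simp add: evalp_def)
next
  case (Cons x p)
  have "evalp G (concat (map (\<lambda>x. map (\<lambda>y. (fst x * fst y, snd x @ snd y)) q) (x # p))) t =
        evalp G (map (\<lambda>y. (fst x * fst y, snd x @ snd y)) q) t +
        evalp G (concat (map (\<lambda>x. map (\<lambda>y. (fst x * fst y, snd x @ snd y)) q) p)) t"
    by (simp add: evalp_def)
  also have "\<dots> = fst x * ind G (snd x) t * evalp G q t + evalp G p t * evalp G q t"
    using Cons evalp_mult_aux by simp
  also have "\<dots> = evalp G (x # p) t * evalp G q t" by (simp add: evalp_Cons algebra_simps)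
  finally show ?case .
qed

lemma evalp_poly: "qfree \<phi> \<Longrightarrow> evalp G (poly \<phi>) t = (if sat G \<phi> t then 1 else 0)"
proof (induction \<phi>)
  case (Adj i j) then show ?case by (simp add: evalp_def ind_def)
next
  case (Eq i j) then show ?case by (simp add: evalp_def ind_def)
next
  case (Neg \<phi>)
  then show ?case by (simp add: evalp_Cons evalp_neg ind_def)
next
  case (Conj \<phi>1 \<phi>2)
  then show ?case by (simp add: evalp_mult)
next
  case (Ex i \<phi>) then show ?case by simp
qed

lemma poly_atoms: "x \<in> set (poly \<phi>) \<Longrightarrow> a \<in> set (snd x) \<Longrightarrow> isatom a \<and> fv a \<subseteq> fv \<phi>"
proof (induction \<phi> arbitrary: x)
  case (Neg \<phi>)
  from Neg.prems obtain y where "y \<in> set (poly \<phi>)" "snd x = snd y" by auto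
  then show ?case using Neg.IH Neg.prems(2) by auto
next
  case (Conj \<phi>1 \<phi>2)
  then show ?case by fastforce
qed auto

lemma sum_ind: "finite T \<Longrightarrow> (\<Sum>t\<in>T. ind G M t) = real (card {t \<in> T. \<forall>a\<in>set M. sat G a t})"
  using sum.inter_filter[of T "\<lambda>_. 1::real" "\<lambda>t. \<forall>a\<in>set M. sat G a t"] by (simp add: ind_def)

lemma sum_evalp: "finite T \<Longrightarrow> (\<Sum>t\<in>T. evalp G p t) / d =
   sum_list (map (\<lambda>x. fst x * (real (card {t \<in> T. \<forall>a\<in>set (snd x). sat G a t}) / d)) p)"
proof (induction p)
  case Nil then show ?case by (simp add: evalp_def)
next
  case (Cons x p)
  have "(\<Sum>t\<in>T. evalp G (x # p) t) = fst x * (\<Sum>t\<in>T. ind G (snd x) t) + (\<Sum>t\<in>T. evalp G p t)"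
    by (simp add: evalp_Cons sum.distrib sum_distrib_left)
  then have "(\<Sum>t\<in>T. evalp G (x # p) t) / d = fst x * (real (card {t \<in> T. \<forall>a\<in>set (snd x). sat G a t}) / d) + (\<Sum>t\<in>T. evalp G p t) / d"
    using sum_ind[OF Cons.prems] by (simp add: add_divide_distrib)
  then show ?case using Cons by simp
qed

lemma conv_sum_list:
  "(\<And>x. x \<in> set p \<Longrightarrow> convergent (\<lambda>n. f x n :: real)) \<Longrightarrow> convergent (\<lambda>n. sum_list (map (\<lambda>x. f x n) p))"
proof (induction p)
  case Nil then show ?case by (simp add: convergent_const)
next
  case (Cons y p)
  then show ?case by (simp add: convergent_add)
qed

lemma L_imp_QF:
  fixes Gs :: "nat \<Rightarrow> 'a graph"
  assumes L: "L_convergent Gs" and fin: "\<And>n. finite_graph (Gs n)"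
    and inv: "convergent (\<lambda>n. 1 / real (card (verts (Gs n))))"
  shows "QF_convergent Gs"
  unfolding QF_convergent_def
proof (intro allI impI)
  fix \<phi> assume q: "qfree \<phi>"
  define k where "k = nvars \<phi>"
  have fvk: "fv \<phi> \<subseteq> {0..<k}" using fv_nvars k_def by simp
  have st: "stone \<phi> (Gs n) = sum_list (map (\<lambda>x. fst x * (real (cnt {0..<k} (snd x) (Gs n)) / real (card (verts (Gs n))) ^ k)) (poly \<phi>))" for n
  proof -
    let ?T = "{0..<k} \<rightarrow>\<^sub>E verts (Gs n)"
    have fT: "finite ?T" using fin[of n] by (simp add: finite_graph_def finite_PiE)
    have "real (card {t \<in> ?T. sat (Gs n) \<phi> t}) = (\<Sum>t\<in>?T. ind (Gs n) [\<phi>] t)"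
      using sum_ind[OF fT, of "Gs n" "[\<phi>]"] by simp
    also have "\<dots> = (\<Sum>t\<in>?T. evalp (Gs n) (poly \<phi>) t)"
      by (intro sum.cong) (simp_all add: evalp_poly[OF q] ind_def)
    finally have "stone \<phi> (Gs n) = (\<Sum>t\<in>?T. evalp (Gs n) (poly \<phi>) t) / real (card (verts (Gs n))) ^ k"
      unfolding stone_def k_def by simp
    also have "\<dots> = sum_list (map (\<lambda>x. fst x * (real (card {t \<in> ?T. \<forall>a\<in>set (snd x). sat (Gs n) a t}) / real (card (verts (Gs n))) ^ k)) (poly \<phi>))"
      by (rule sum_evalp[OF fT])
    finally show ?thesis unfolding cnt_def .
  qed
  have "convergent (\<lambda>n. sum_list (map (\<lambda>x. fst x * (real (cnt {0..<k} (snd x) (Gs n)) / real (card (verts (Gs n))) ^ k)) (poly \<phi>)))"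
  proof (rule conv_sum_list)
    fix x assume x: "x \<in> set (poly \<phi>)"
    have "\<forall>a\<in>set (snd x). isatom a \<and> fv a \<subseteq> {0..<k}" using poly_atoms[OF x] fvk by blast
    then have "convergent (\<lambda>n. real (cnt {0..<k} (snd x) (Gs n)) / real (card (verts (Gs n))) ^ (card {0..<k} + 0))"
      by (intro main_conv[OF L fin inv]) auto
    then have "convergent (\<lambda>n. real (cnt {0..<k} (snd x) (Gs n)) / real (card (verts (Gs n))) ^ k)" by simp
    then show "convergent (\<lambda>n. fst x * (real (cnt {0..<k} (snd x) (Gs n)) / real (card (verts (Gs n))) ^ k))"
      by (intro convergent_mult convergent_const)
  qed
  then show "convergent (\<lambda>n. stone \<phi> (Gs n))" unfolding st .
qed

theorem lemma5p8:
  fixes Gs :: "nat \<Rightarrow> nat graph" and H :: "nat graph"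
  assumes "\<And>n. finite_graph (Gs n)"
    and "is_graph H"
    and "elem_converges_to Gs H"
    and "ultra_homogeneous H"
  shows "(FO_convergent Gs \<longleftrightarrow> QF_convergent Gs) \<and>
         (QF_convergent Gs \<longleftrightarrow> L_convergent Gs)"
proof -
  have inv: "convergent (\<lambda>n. 1 / real (card (verts (Gs n))))"
    by (rule invsize[OF assms(1) assms(2) assms(3)])
  have "FO_convergent Gs \<Longrightarrow> QF_convergent Gs" by (simp add: FO_convergent_def QF_convergent_def)
  moreover have "QF_convergent Gs \<Longrightarrow> FO_convergent Gs" by (rule QF_imp_FO[OF assms(3) assms(4)])
  moreover have "QF_convergent Gs \<Longrightarrow> L_convergent Gs" by (rule QF_imp_L)
  moreover have "L_convergent Gs \<Longrightarrow> QF_convergent Gs" by (rule L_imp_QF[OF _ assms(1) inv])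
  ultimately show ?thesis by blast
qed

end
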